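(* Let $n\ge1$, $p$ a prime dividing $n$, $0\le t\le p-1$, and $q\in B\setminus B_t$. Put $Q:=B_t\cup\{q\}$. If $y\in\mathrm{Sm}(\prec_{deg},Q)\setminus\mathrm{Sm}(\prec_{deg},B_t)$, then $\deg y\ge\frac{n(p-1)}{p}$.
   Context: $\omega_1=e^{2\pi i/p}$, $\omega_j=\omega_1^j$; $B=\{1,\omega_1,\ldots,\omega_{p-1}\}^n\subseteq\mathbb{C}^n$, $B_t=\{(t_1,\ldots,t_n)\in B: t_1\cdots t_n=\omega_t\}$. $\prec_{deg}$ is the deglex order on monomials of $\mathbb{C}[x_1,\dots,x_n]$ (compare degrees first, ties broken lexicographically with $x_n\prec\cdots\prec x_1$). $\mathrm{Sm}(\prec,X)$ is the set of monomials that are not the $\prec$-leading monomial of any nonzero polynomial vanishing on $X$. *)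

theory Defs
  imports Complex_Main "HOL-Library.Poly_Mapping" "HOL-Computational_Algebra.Primes"
begin

(* Variables x_1,...,x_n are indexed 0,...,n-1. A monomial is an exponent
  vector m :: nat \<Rightarrow>\<^sub>0 nat supported in {..<n}; a polynomial in
  C[x_1..x_n] is a finitely supported map from monomials to complex coefficients,
  all of whose monomials are supported in {..<n}. Points of C^n are functions
  nat \<Rightarrow> complex, only the coordinates 0..n-1 of which matter.*)

type_synonym monom = "nat \<Rightarrow>\<^sub>0 nat"
type_synonym mpoly = "monom \<Rightarrow>\<^sub>0 complex"

definition is_monom :: "nat \<Rightarrow> monom \<Rightarrow> bool" where
  "is_monom n m \<longleftrightarrow> Poly_Mapping.keys m \<subseteq> {..<n}"

definition is_poly :: "nat \<Rightarrow> mpoly \<Rightarrow> bool" where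
  "is_poly n f \<longleftrightarrow> (\<forall>m\<in>Poly_Mapping.keys f. is_monom n m)"

definition mdeg :: "monom \<Rightarrow> nat" where
  "mdeg m = (\<Sum>i\<in>Poly_Mapping.keys m. Poly_Mapping.lookup m i)"

definition monom_eval :: "monom \<Rightarrow> (nat \<Rightarrow> complex) \<Rightarrow> complex" where
  "monom_eval m x = (\<Prod>i\<in>Poly_Mapping.keys m. x i ^ Poly_Mapping.lookup m i)"

definition poly_eval :: "mpoly \<Rightarrow> (nat \<Rightarrow> complex) \<Rightarrow> complex" where
  "poly_eval f x = (\<Sum>m\<in>Poly_Mapping.keys f. Poly_Mapping.lookup f m * monom_eval m x)"

(* Lex order with x_n < ... < x_1: compare exponent of x_1 (index 0) first.*)
definition lex_less :: "monom \<Rightarrow> monom \<Rightarrow> bool" where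
  "lex_less m m' \<longleftrightarrow> (\<exists>i. Poly_Mapping.lookup m i < Poly_Mapping.lookup m' i \<and> (\<forall>j<i. Poly_Mapping.lookup m j = Poly_Mapping.lookup m' j))"

definition deglex_less :: "monom \<Rightarrow> monom \<Rightarrow> bool" where
  "deglex_less m m' \<longleftrightarrow> mdeg m < mdeg m' \<or> (mdeg m = mdeg m' \<and> lex_less m m')"

definition is_leading_monom :: "mpoly \<Rightarrow> monom \<Rightarrow> bool" where
  "is_leading_monom f m \<longleftrightarrow> m \<in> Poly_Mapping.keys f \<and> (\<forall>m'\<in>Poly_Mapping.keys f. m' \<noteq> m \<longrightarrow> deglex_less m' m)"

definition Sm_deglex :: "nat \<Rightarrow> (nat \<Rightarrow> complex) set \<Rightarrow> monom set" where
  "Sm_deglex n X = {m. is_monom n m \<and>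
     \<not> (\<exists>f. f \<noteq> 0 \<and> is_poly n f \<and> (\<forall>x\<in>X. poly_eval f x = 0) \<and> is_leading_monom f m)}"

definition omega :: "nat \<Rightarrow> nat \<Rightarrow> complex" where
  "omega p j = cis (2 * pi * real j / real p)"

definition cubeB :: "nat \<Rightarrow> nat \<Rightarrow> (nat \<Rightarrow> complex) set" where
  "cubeB n p = {x. (\<forall>i<n. x i \<in> omega p ` {0..<p}) \<and> (\<forall>i\<ge>n. x i = 0)}"

definition cubeBt :: "nat \<Rightarrow> nat \<Rightarrow> nat \<Rightarrow> (nat \<Rightarrow> complex) set" where
  "cubeBt n p t = {x \<in> cubeB n p. (\<Prod>i<n. x i) = omega p t}"

end

theory Submission
  imports Defs "HOL-Library.FuncSet"
begin


definition w :: "nat \<Rightarrow> int \<Rightarrow> complex" where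
  "w p m = cis (2 * pi * of_int m / of_nat p)"

lemma w_add: "w p (a + b) = w p a * w p b"
  by (simp add: w_def cis_mult add_divide_distrib distrib_left)

lemma w_zero[simp]: "w p 0 = 1" by (simp add: w_def)

lemma w_dvd: assumes "p > 0" "int p dvd m" shows "w p m = 1"
proof -
  obtain k where "m = int p * k" using assms by (auto elim: dvdE)
  then have "2 * pi * of_int m / of_nat p = 2 * pi * of_int k" using assms by simp
  then show ?thesis by (simp add: w_def)
qed

lemma w_ne1: assumes "p > 0" "\<not> int p dvd m" shows "w p m \<noteq> 1"
proof
  assume "w p m = 1"
  then have "cos (2 * pi * of_int m / of_nat p) = 1"
    by (metis Re_complex_of_real cis.sel(1) one_complex.sel(1) w_def)
  then obtain k :: int where k: "2 * pi * of_int m / of_nat p = of_int k * 2 * pi"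
    using cos_one_2pi_int by blast
  then have "of_int m = (of_int (k * int p) :: real)" using assms(1)
    by (simp add: field_simps)
  then have "m = k * int p" by linarith
  then show False using assms by simp
qed

lemma w_pow: "w p m ^ j = w p (m * int j)"
  by (simp add: w_def DeMoivre mult.commute mult.left_commute)

lemma w_sum: "finite I \<Longrightarrow> w p (\<Sum>i\<in>I. f i) = (\<Prod>i\<in>I. w p (f i))"
  by (induction I rule: finite_induct) (auto simp: w_add)

lemma w_mod: assumes "p > 0" "int p dvd (a - b)" shows "w p a = w p b"
proof -
  have "w p a = w p ((a - b) + b)" by simp
  also have "\<dots> = w p b" using w_add w_dvd[OF assms] by (metis mult_1)
  finally show ?thesis .
qed

lemma geo: assumes "p > 0"
  shows "(\<Sum>j<p. w p (m * int j)) = (if int p dvd m then of_nat p else 0)"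
proof (cases "int p dvd m")
  case True
  then have "\<And>j. w p (m * int j) = 1" using assms by (intro w_dvd) auto
  then show ?thesis using True by simp
next
  case False
  let ?z = "w p m"
  have z1: "?z \<noteq> 1" using w_ne1 assms False by blast
  have zp: "?z ^ p = 1" using w_pow w_dvd assms by (metis dvd_triv_right)
  have "(\<Sum>j<p. w p (m * int j)) = (\<Sum>j<p. ?z ^ j)" by (simp add: w_pow)
  also have "\<dots> = 0" using z1 zp by (simp add: sum_gp_strict)
  finally show ?thesis using False by simp
qed

lemma omega_w: "omega p j = w p (int j)" by (simp add: omega_def w_def)


definition EE :: "nat \<Rightarrow> nat \<Rightarrow> (nat \<Rightarrow> nat) set" where
  "EE n p = PiE {..<n} (\<lambda>_. {..<p})"

definition pt :: "nat \<Rightarrow> nat \<Rightarrow> (nat \<Rightarrow> nat) \<Rightarrow> nat \<Rightarrow> complex" where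
  "pt n p e = (\<lambda>i. if i < n then omega p (e i) else 0)"

definition dot :: "nat \<Rightarrow> monom \<Rightarrow> (nat \<Rightarrow> nat) \<Rightarrow> int" where
  "dot n a e = (\<Sum>i<n. int (Poly_Mapping.lookup a i) * int (e i))"

lemma finite_EE: "finite (EE n p)" by (simp add: EE_def finite_PiE)

lemma sum_keys_lessThan:
  assumes "is_monom n a" "\<And>i. h i 0 = 0"
  shows "(\<Sum>i\<in>Poly_Mapping.keys a. h i (Poly_Mapping.lookup a i)) = (\<Sum>i<n. h i (Poly_Mapping.lookup a i))"
  using assms unfolding is_monom_def
  by (intro sum.mono_neutral_left) (auto simp: in_keys_iff)

lemma mdeg_lessThan: "is_monom n a \<Longrightarrow> mdeg a = (\<Sum>i<n. Poly_Mapping.lookup a i)"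
  unfolding mdeg_def using sum_keys_lessThan[of n a "\<lambda>i x. x"] by simp

lemma monom_pt:
  assumes "is_monom n a" "p > 0"
  shows "monom_eval a (pt n p e) = w p (dot n a e)"
proof -
  have "monom_eval a (pt n p e) = (\<Prod>i\<in>Poly_Mapping.keys a. w p (int (Poly_Mapping.lookup a i) * int (e i)))"
    unfolding monom_eval_def
  proof (intro prod.cong refl)
    fix i assume "i \<in> Poly_Mapping.keys a"
    then have "i < n" using assms unfolding is_monom_def by auto
    then show "pt n p e i ^ Poly_Mapping.lookup a i = w p (int (Poly_Mapping.lookup a i) * int (e i))"
      by (simp add: pt_def omega_w w_pow mult.commute)
  qed
  also have "\<dots> = w p (\<Sum>i\<in>Poly_Mapping.keys a. int (Poly_Mapping.lookup a i) * int (e i))"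
    by (simp add: w_sum)
  also have "(\<Sum>i\<in>Poly_Mapping.keys a. int (Poly_Mapping.lookup a i) * int (e i)) = dot n a e"
    unfolding dot_def using sum_keys_lessThan[OF assms(1), of "\<lambda>i x. int x * int (e i)"] by simp
  finally show ?thesis .
qed

lemma poly_pt:
  assumes "is_poly n f" "p > 0"
  shows "poly_eval f (pt n p e) = (\<Sum>a\<in>Poly_Mapping.keys f. Poly_Mapping.lookup f a * w p (dot n a e))"
  unfolding poly_eval_def using assms by (intro sum.cong refl) (auto simp: is_poly_def monom_pt)

lemma orth:
  assumes "p > 0"
  shows "(\<Sum>e\<in>EE n p. w p (\<Sum>i<n. m i * int (e i))) = (if \<forall>i<n. int p dvd m i then of_nat p ^ n else 0)"
proof -
  have "(\<Sum>e\<in>EE n p. w p (\<Sum>i<n. m i * int (e i))) = (\<Sum>e\<in>EE n p. \<Prod>i<n. w p (m i * int (e i)))"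
    by (simp add: w_sum)
  also have "\<dots> = (\<Prod>i<n. \<Sum>j<p. w p (m i * int j))"
    unfolding EE_def using prod_sum_PiE[of "{..<n}" "\<lambda>_. {..<p}" "\<lambda>i j. w p (m i * int j)"] by simp
  also have "\<dots> = (\<Prod>i<n. if int p dvd m i then of_nat p else 0)"
    using geo[OF assms] by simp
  also have "\<dots> = (if \<forall>i<n. int p dvd m i then of_nat p ^ n else 0)"
  proof (cases "\<forall>i<n. int p dvd m i")
    case True
    then show ?thesis by simp
  next
    case False
    then obtain i where "i < n" "\<not> int p dvd m i" by blast
    then show ?thesis using False by (intro trans[OF prod_zero]) auto
  qed
  finally show ?thesis .
qed

lemma pt_in_B: assumes "e \<in> EE n p" shows "pt n p e \<in> cubeB n p"
proof -
  have "\<forall>i<n. e i < p" using assms unfolding EE_def by auto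
  then have "\<forall>i<n. omega p (e i) \<in> omega p ` {0..<p}" by auto
  then show ?thesis unfolding pt_def cubeB_def by auto
qed

lemma pt_in_Bt:
  assumes "e \<in> EE n p" "p > 0" "int p dvd (\<Sum>i<n. int (e i)) - int t"
  shows "pt n p e \<in> cubeBt n p t"
proof -
  have "(\<Prod>i<n. pt n p e i) = (\<Prod>i<n. w p (int (e i)))"
    by (simp add: pt_def omega_w)
  also have "\<dots> = w p (\<Sum>i<n. int (e i))" by (simp add: w_sum)
  also have "\<dots> = w p (int t)" by (rule w_mod[OF assms(2,3)])
  also have "\<dots> = omega p t" by (simp only: omega_w)
  finally have "(\<Prod>i<n. pt n p e i) = omega p t" .
  then show ?thesis using pt_in_B[OF assms(1)] unfolding cubeBt_def by blast
qed

lemma B_pt: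
  assumes "x \<in> cubeB n p"
  shows "\<exists>e\<in>EE n p. x = pt n p e"
proof -
  have h: "\<forall>i<n. \<exists>j. j < p \<and> x i = omega p j" 
  proof (intro allI impI)
    fix i assume "i < n"
    then have "x i \<in> omega p ` {0..<p}" using assms unfolding cubeB_def by blast
    then obtain j where "j \<in> {0..<p}" "x i = omega p j" by (rule imageE)
    then show "\<exists>j. j < p \<and> x i = omega p j" by auto
  qed
  have "\<forall>i. \<exists>j. i < n \<longrightarrow> (j < p \<and> x i = omega p j)" using h by blast
  then obtain e0 where e0: "\<forall>i. i < n \<longrightarrow> (e0 i < p \<and> x i = omega p (e0 i))"
    by (rule choice[THEN exE]) blast
  define e where "e = (\<lambda>i. if i < n then e0 i else undefined)"
  have "\<forall>i<n. e i < p \<and> x i = omega p (e i)" using e0 unfolding e_def by simp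
  note ee = this
  have "e \<in> EE n p" unfolding EE_def
  proof (rule PiE_I)
    show "\<And>i. i \<in> {..<n} \<Longrightarrow> e i \<in> {..<p}" using ee by auto
    show "\<And>i. i \<notin> {..<n} \<Longrightarrow> e i = undefined" unfolding e_def by auto
  qed
  moreover have "x = pt n p e"
  proof
    fix i show "x i = pt n p e i"
    proof (cases "i < n")
      case True then show ?thesis using ee unfolding pt_def by auto
    next
      case False then show ?thesis using assms unfolding pt_def cubeB_def by auto
    qed
  qed
  ultimately show ?thesis by blast
qed



lemma coord_ineq:
  fixes u v k p :: nat
  assumes "0 < k" "k < p" "int p dvd int u + int k - int v"
  shows "k * (p - k) \<le> k * u + (p - k) * v"
proof -
  have "int v mod int p = int (u + k) mod int p"
    using assms(3) by (metis add.commute diff_add_cancel mod_add_self2 mod_eq_dvd_iff of_nat_add)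
  then have vm: "v mod p = (u + k) mod p" by (metis of_nat_eq_iff zmod_int)
  show ?thesis
  proof (cases "u mod p + k < p")
    case True
    have "(u + k) mod p = (u mod p + k) mod p" by (simp add: mod_add_left_eq)
    also have "\<dots> = u mod p + k" using True by simp
    finally have "k \<le> v" using vm by (metis le_add2 mod_le_divisor order_trans mod_less_eq_dividend)
    then have "(p - k) * k \<le> (p - k) * v" by simp
    then have "k * (p - k) \<le> (p - k) * v" by (simp add: mult.commute)
    then show ?thesis by linarith
  next
    case False
    then have "p - k \<le> u" using mod_less_eq_dividend[of u p] by linarith
    then have "k * (p - k) \<le> k * u" by simp
    then show ?thesis by linarith
  qed
qed

lemma kpk: fixes k p :: nat assumes "0 < k" "k < p" shows "p - 1 \<le> k * (p - k)"
proof -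
  obtain j where j: "k = Suc j" using assms by (cases k) auto
  obtain l where l: "p - k = Suc l" using assms by (metis Suc_pred zero_less_diff)
  have "p - 1 = j + l + 1" using j l assms by simp
  also have "\<dots> \<le> Suc j * Suc l" by simp
  finally show ?thesis using j l by simp
qed

lemma deg_pair:
  assumes "is_monom n a" "is_monom n a'" "0 < k" "k < p"
    and "\<forall>i<n. int p dvd int (Poly_Mapping.lookup a' i) + int k - int (Poly_Mapping.lookup a i)"
    and "mdeg a \<le> d" "mdeg a' \<le> d"
  shows "n * (p - 1) \<le> p * d"
proof -
  have "n * (k * (p - k)) = (\<Sum>i<n. k * (p - k))" by simp
  also have "\<dots> \<le> (\<Sum>i<n. k * Poly_Mapping.lookup a' i + (p - k) * Poly_Mapping.lookup a i)"
    using assms(3,4,5) by (intro sum_mono coord_ineq) auto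
  also have "\<dots> = k * mdeg a' + (p - k) * mdeg a"
    using mdeg_lessThan[OF assms(1)] mdeg_lessThan[OF assms(2)] by (simp add: sum.distrib sum_distrib_left)
  also have "\<dots> \<le> k * d + (p - k) * d" using assms(6,7) by (intro add_mono mult_left_mono) auto
  also have "\<dots> = p * d" using assms(4) by (simp add: add_mult_distrib[symmetric])
  finally have "n * (k * (p - k)) \<le> p * d" .
  moreover have "n * (p - 1) \<le> n * (k * (p - k))" using kpk[OF assms(3,4)] by simp
  ultimately show ?thesis by linarith
qed

lemma arg_id:
  "dot n a e + ((\<Sum>i<n. int (e i)) - int t) * int k + (- dot n a0 e) =
   - (int k * int t) + (\<Sum>i<n. (int (Poly_Mapping.lookup a i) + int k - int (Poly_Mapping.lookup a0 i)) * int (e i))"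
  unfolding dot_def by (simp add: algebra_simps sum.distrib sum_subtractf sum_distrib_left sum_distrib_right)

lemma fourier:
  assumes "p > 0" "is_poly n f" "\<forall>x\<in>cubeBt n p t. poly_eval f x = 0"
  shows "(\<Sum>k<p. w p (- (int k * int t)) * (\<Sum>a\<in>Poly_Mapping.keys f.
      if (\<forall>i<n. int p dvd int (Poly_Mapping.lookup a i) + int k - int (Poly_Mapping.lookup a0 i))
      then Poly_Mapping.lookup f a else 0)) = 0"
proof -
  let ?K = "Poly_Mapping.keys f"
  let ?c = "Poly_Mapping.lookup f"
  let ?R = "\<lambda>k a. \<forall>i<n. int p dvd int (Poly_Mapping.lookup a i) + int k - int (Poly_Mapping.lookup a0 i)"
  let ?m = "\<lambda>k a i. int (Poly_Mapping.lookup a i) + int k - int (Poly_Mapping.lookup a0 i)"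
  define g where "g e = poly_eval f (pt n p e)" for e
  define S where "S e = (\<Sum>k<p. w p (((\<Sum>i<n. int (e i)) - int t) * int k))" for e
  define T where "T = (\<Sum>e\<in>EE n p. g e * S e * w p (- dot n a0 e))"
  have T0: "T = 0"
    unfolding T_def
  proof (intro sum.neutral ballI)
    fix e assume e: "e \<in> EE n p"
    show "g e * S e * w p (- dot n a0 e) = 0"
    proof (cases "int p dvd (\<Sum>i<n. int (e i)) - int t")
      case True then have "g e = 0" using pt_in_Bt[OF e assms(1) True] assms(3) g_def by auto
      then show ?thesis by simp
    next
      case False then show ?thesis using geo[OF assms(1)] unfolding S_def by simp
    qed
  qed
  have T1: "T = (\<Sum>e\<in>EE n p. \<Sum>a\<in>?K. \<Sum>k<p. ?c a * w p (- (int k * int t)) * w p (\<Sum>i<n. ?m k a i * int (e i)))"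
    unfolding T_def
  proof (intro sum.cong refl)
    fix e
    have "g e * S e * w p (- dot n a0 e) =
      (\<Sum>a\<in>?K. \<Sum>k<p. ?c a * (w p (dot n a e) * w p (((\<Sum>i<n. int (e i)) - int t) * int k) * w p (- dot n a0 e)))"
      unfolding g_def S_def poly_pt[OF assms(2,1)] sum_distrib_right
      by (intro sum.cong refl) (simp add: sum_distrib_left sum_distrib_right mult_ac)
    also have "\<dots> = (\<Sum>a\<in>?K. \<Sum>k<p. ?c a * w p (- (int k * int t)) * w p (\<Sum>i<n. ?m k a i * int (e i)))"
    proof (intro sum.cong refl)
      fix a k
      have "w p (dot n a e) * w p (((\<Sum>i<n. int (e i)) - int t) * int k) * w p (- dot n a0 e)
        = w p (- (int k * int t)) * w p (\<Sum>i<n. ?m k a i * int (e i))"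
        by (simp only: w_add[symmetric] arg_id)
      then show "?c a * (w p (dot n a e) * w p (((\<Sum>i<n. int (e i)) - int t) * int k) * w p (- dot n a0 e))
        = ?c a * w p (- (int k * int t)) * w p (\<Sum>i<n. ?m k a i * int (e i))"
        by (simp add: mult.assoc)
    qed
    finally show "g e * S e * w p (- dot n a0 e) =
      (\<Sum>a\<in>?K. \<Sum>k<p. ?c a * w p (- (int k * int t)) * w p (\<Sum>i<n. ?m k a i * int (e i)))" .
  qed
  also have "\<dots> = (\<Sum>a\<in>?K. \<Sum>e\<in>EE n p. \<Sum>k<p. ?c a * w p (- (int k * int t)) * w p (\<Sum>i<n. ?m k a i * int (e i)))"
    by (rule sum.swap)
  also have "\<dots> = (\<Sum>a\<in>?K. \<Sum>k<p. \<Sum>e\<in>EE n p. ?c a * w p (- (int k * int t)) * w p (\<Sum>i<n. ?m k a i * int (e i)))"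
    by (intro sum.cong refl sum.swap)
  also have "\<dots> = (\<Sum>k<p. \<Sum>a\<in>?K. \<Sum>e\<in>EE n p. ?c a * w p (- (int k * int t)) * w p (\<Sum>i<n. ?m k a i * int (e i)))"
    by (rule sum.swap)
  also have "\<dots> = (\<Sum>k<p. \<Sum>a\<in>?K. ?c a * w p (- (int k * int t)) * (if ?R k a then of_nat p ^ n else 0))"
    by (intro sum.cong refl) (simp add: sum_distrib_left[symmetric] orth[OF assms(1)])
  also have "\<dots> = of_nat p ^ n * (\<Sum>k<p. w p (- (int k * int t)) * (\<Sum>a\<in>?K. if ?R k a then ?c a else 0))"
    by (simp add: sum_distrib_left sum_distrib_right mult_ac if_distrib cong: if_cong)
  finally have "of_nat p ^ n * (\<Sum>k<p. w p (- (int k * int t)) * (\<Sum>a\<in>?K. if ?R k a then ?c a else 0)) = 0"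
    using T0 by simp
  then show ?thesis using assms(1) by simp
qed

lemma class_zero:
  fixes K :: "monom set" and c :: "monom \<Rightarrow> complex"
  assumes fin: "finite K" and p: "p > 0"
    and hz: "\<forall>b\<in>K. (\<Sum>a\<in>K. if (\<forall>i<n. int p dvd int (Poly_Mapping.lookup a i) - int (Poly_Mapping.lookup b i)) then c a else 0) = 0"
  shows "(\<Sum>a\<in>K. c a * w p (dot n a e0)) = 0"
proof -
  define R where "R a b \<longleftrightarrow> (\<forall>i<n. int p dvd int (Poly_Mapping.lookup a i) - int (Poly_Mapping.lookup b i))" for a b
  have Rsym: "R a b \<Longrightarrow> R b a" for a b unfolding R_def by (metis dvd_diff_commute)
  have Rtrans: "R a b \<Longrightarrow> R b c' \<Longrightarrow> R a c'" for a b c' unfolding R_def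
    by (metis (no_types, lifting) diff_add_cancel add_diff_eq dvd_add)
  have Rrefl: "R a a" for a unfolding R_def by simp
  define N where "N a = card {b\<in>K. R a b}" for a
  define W where "W a = w p (dot n a e0)" for a
  have NR: "R a b \<Longrightarrow> N a = N b" for a b
    unfolding N_def using Rsym Rtrans by (metis (mono_tags, lifting))
  have WR: "R a b \<Longrightarrow> W a = W b" for a b
  proof -
    assume "R a b"
    have "dot n a e0 - dot n b e0 = (\<Sum>i<n. (int (Poly_Mapping.lookup a i) - int (Poly_Mapping.lookup b i)) * int (e0 i))"
      unfolding dot_def by (simp add: sum_subtractf left_diff_distrib)
    also have "int p dvd \<dots>" using \<open>R a b\<close> unfolding R_def by (intro dvd_sum) auto
    finally show ?thesis unfolding W_def using w_mod[OF p] by blast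
  qed
  have Npos: "a \<in> K \<Longrightarrow> N a \<ge> 1" for a
  proof -
    assume "a \<in> K"
    then have "a \<in> {b\<in>K. R a b}" using Rrefl by simp
    then show ?thesis unfolding N_def using fin by (metis (no_types, lifting) One_nat_def Suc_leI card_gt_0_iff empty_iff finite_subset mem_Collect_eq subsetI)
  qed
  have "0 = (\<Sum>b\<in>K. (W b / of_nat (N b)) * (\<Sum>a\<in>K. if R a b then c a else 0))"
    using hz unfolding R_def by simp
  also have "\<dots> = (\<Sum>b\<in>K. \<Sum>a\<in>K. if R a b then c a * W b / of_nat (N b) else 0)"
    by (simp add: sum_distrib_left if_distrib mult_ac cong: if_cong)
  also have "\<dots> = (\<Sum>a\<in>K. \<Sum>b\<in>K. if R a b then c a * W b / of_nat (N b) else 0)"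
    by (rule sum.swap)
  also have "\<dots> = (\<Sum>a\<in>K. \<Sum>b\<in>K. if R a b then c a * W a / of_nat (N a) else 0)"
    using NR WR by (intro sum.cong refl) auto
  also have "\<dots> = (\<Sum>a\<in>K. of_nat (N a) * (c a * W a / of_nat (N a)))"
  proof (intro sum.cong refl)
    fix a
    have "(\<Sum>b\<in>K. if R a b then c a * W a / of_nat (N a) else 0) = (\<Sum>b\<in>{b\<in>K. R a b}. c a * W a / of_nat (N a))"
      by (rule sum.inter_filter[OF fin, symmetric])
    also have "\<dots> = of_nat (N a) * (c a * W a / of_nat (N a))" unfolding N_def by simp
    finally show "(\<Sum>b\<in>K. if R a b then c a * W a / of_nat (N a) else 0) = of_nat (N a) * (c a * W a / of_nat (N a))" .
  qed
  also have "\<dots> = (\<Sum>a\<in>K. c a * W a)"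
  proof (intro sum.cong refl)
    fix a assume "a \<in> K"
    then have "of_nat (N a) \<noteq> (0::complex)" using Npos[of a] by simp
    then show "of_nat (N a) * (c a * W a / of_nat (N a)) = c a * W a" by simp
  qed
  finally show ?thesis unfolding W_def by simp
qed

theorem mainTheorem10:
  fixes n p t :: nat and q :: "nat \<Rightarrow> complex" and y :: monom
  assumes "n \<ge> 1" and "prime p" and "p dvd n" and "t \<le> p - 1"
    and "q \<in> cubeB n p - cubeBt n p t"
    and "y \<in> Sm_deglex n (cubeBt n p t \<union> {q}) - Sm_deglex n (cubeBt n p t)"
  shows "real (mdeg y) \<ge> real n * (real p - 1) / real p"
proof (rule ccontr)
  assume neg: "\<not> ?thesis"
  have p1: "p > 1" using assms(2) prime_gt_1_nat by blast
  then have p0: "p > 0" by simp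
  have "real (mdeg y) < real n * (real p - 1) / real p" using neg by simp
  then have "real p * real (mdeg y) < real n * (real p - 1)" using p0
    by (simp add: pos_less_divide_eq mult.commute)
  moreover have "real (p - 1) = real p - 1" using p0 by (simp add: of_nat_diff)
  ultimately have "real (p * mdeg y) < real (n * (p - 1))" by simp
  then have lt: "p * mdeg y < n * (p - 1)" by (simp only: of_nat_less_iff)
  have ySm: "y \<in> Sm_deglex n (cubeBt n p t \<union> {q})" and ynSm: "y \<notin> Sm_deglex n (cubeBt n p t)"
    using assms(6) by auto
  have ymon: "is_monom n y" using ySm unfolding Sm_deglex_def by simp
  obtain f where fnz: "f \<noteq> 0" and fpoly: "is_poly n f" and fvan: "\<forall>x\<in>cubeBt n p t. poly_eval f x = 0"
    and flead: "is_leading_monom f y"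
    using ynSm ymon unfolding Sm_deglex_def by blast
  let ?K = "Poly_Mapping.keys f"
  let ?c = "Poly_Mapping.lookup f"
  have degs: "\<forall>a\<in>?K. mdeg a \<le> mdeg y"
  proof
    fix a assume "a \<in> ?K"
    then have "a = y \<or> deglex_less a y" using flead unfolding is_leading_monom_def by blast
    then show "mdeg a \<le> mdeg y" unfolding deglex_less_def by auto
  qed
  have mons: "\<forall>a\<in>?K. is_monom n a" using fpoly unfolding is_poly_def by blast
  have hz: "\<forall>b\<in>?K. (\<Sum>a\<in>?K. if (\<forall>i<n. int p dvd int (Poly_Mapping.lookup a i) - int (Poly_Mapping.lookup b i)) then ?c a else 0) = 0"
  proof
    fix b assume b: "b \<in> ?K"
    define X where "X k = (\<Sum>a\<in>?K. if (\<forall>i<n. int p dvd int (Poly_Mapping.lookup a i) + int k - int (Poly_Mapping.lookup b i)) then ?c a else 0)" for k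
    have F: "(\<Sum>k<p. w p (- (int k * int t)) * X k) = 0"
      unfolding X_def by (rule fourier[OF p0 fpoly fvan])
    have Xk: "X (Suc k) = 0" if "k < p - 1" for k
      unfolding X_def
    proof (intro sum.neutral ballI)
      fix a assume a: "a \<in> ?K"
      have "\<not> (\<forall>i<n. int p dvd int (Poly_Mapping.lookup a i) + int (Suc k) - int (Poly_Mapping.lookup b i))"
      proof
        assume h: "\<forall>i<n. int p dvd int (Poly_Mapping.lookup a i) + int (Suc k) - int (Poly_Mapping.lookup b i)"
        have "n * (p - 1) \<le> p * mdeg y"
          using deg_pair[of n b a "Suc k" p "mdeg y"] mons degs a b h that by auto
        then show False using lt by simp
      qed
      then show "(if (\<forall>i<n. int p dvd int (Poly_Mapping.lookup a i) + int (Suc k) - int (Poly_Mapping.lookup b i)) then ?c a else 0) = 0"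
        by (simp only: if_False)
    qed
    obtain p' where pp: "p = Suc p'" using p0 by (cases p) auto
    have "(\<Sum>k<p. w p (- (int k * int t)) * X k) = w p (- (int 0 * int t)) * X 0 + (\<Sum>k<p - 1. w p (- (int (Suc k) * int t)) * X (Suc k))"
      unfolding pp diff_Suc_1 by (rule sum.lessThan_Suc_shift)
    also have "\<dots> = X 0" using Xk by simp
    finally have "X 0 = 0" using F by simp
    then show "(\<Sum>a\<in>?K. if (\<forall>i<n. int p dvd int (Poly_Mapping.lookup a i) - int (Poly_Mapping.lookup b i)) then ?c a else 0) = 0"
      unfolding X_def by simp
  qed
  have qB: "q \<in> cubeB n p" using assms(5) by simp
  then obtain e0 where e0: "e0 \<in> EE n p" "q = pt n p e0" using B_pt by blast
  have "poly_eval f q = (\<Sum>a\<in>?K. ?c a * w p (dot n a e0))"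
    using poly_pt[OF fpoly p0] e0 by simp
  also have "\<dots> = 0" by (rule class_zero[OF finite_keys p0 hz])
  finally have "poly_eval f q = 0" .
  then have "\<forall>x\<in>cubeBt n p t \<union> {q}. poly_eval f x = 0" using fvan by auto
  then have "y \<notin> Sm_deglex n (cubeBt n p t \<union> {q})"
    using fnz fpoly flead unfolding Sm_deglex_def by blast
  then show False using ySm by simp
qed

end
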